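(* Let $k\ge0$ be an integer. For $j\in\{1,2\}$ let $(\pi_j^{\mathrm{pre}},q_j^{\mathrm{pre}})$ and $(\pi_j^{\mathrm{post}},q_j^{\mathrm{post}})$ be pre- and post-branch (policy, dynamics) pairs, and let $\eta_j=\eta_k(\pi_j^{\mathrm{pre}},q_j^{\mathrm{pre}};\pi_j^{\mathrm{post}},q_j^{\mathrm{post}})$. For $t\ge0$ and $0\le i\le t$ let $\nu_{t,i}$ be the law of $s_i$ in the branched construction for time $t$ using the pairs of index $j=1$. Suppose that for all $t\ge0$: (i) for all $0\le i<m_t$: $\mathbb E_{s\sim\nu_{t,i},\,a\sim\pi_1^{\mathrm{pre}}(\cdot\mid s)}\big[D_{TV}(q_1^{\mathrm{pre}}(\cdot\mid s,a),q_2^{\mathrm{pre}}(\cdot\mid s,a))\big]\le\epsilon_m^{\mathrm{pre}}$; (ii) for all $m_t\le i<t$: $\mathbb E_{s\sim\nu_{t,i},\,a\sim\pi_1^{\mathrm{post}}(\cdot\mid s)}\big[D_{TV}(q_1^{\mathrm{post}}(\cdot\mid s,a),q_2^{\mathrm{post}}(\cdot\mid s,a))\big]\le\epsilon_m^{\mathrm{post}}$; and that $\sup_s D_{TV}(\pi_1^{\mathrm{pre}}(\cdot\mid s),\pi_2^{\mathrm{pre}}(\cdot\mid s))\le\epsilon_\pi^{\mathrm{pre}}$ and $\sup_s D_{TV}(\pi_1^{\mathrm{post}}(\cdot\mid s),\pi_2^{\mathrm{post}}(\cdot\mid s))\le\epsilon_\pi^{\mathrm{post}}$. Then $$|\eta_1-\eta_2|\le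 2r_{\max}\left[\frac{\gamma^{k+1}}{(1-\gamma)^2}(\epsilon_m^{\mathrm{pre}}+\epsilon_\pi^{\mathrm{pre}})+\frac{k}{1-\gamma}(\epsilon_m^{\mathrm{post}}+\epsilon_\pi^{\mathrm{post}})+\frac{\gamma^k}{1-\gamma}\epsilon_\pi^{\mathrm{pre}}+\frac{1}{1-\gamma}\epsilon_\pi^{\mathrm{post}}\right].$$
   Context: Let $\mathcal S$ and $\mathcal A$ be countable (e.g. finite) state and action spaces, $\rho_0$ a probability distribution on $\mathcal S$ (initial state distribution), $\gamma\in(0,1)$ a discount factor, and $r:\mathcal S\times\mathcal A\to\mathbb R$ a reward function with $|r(s,a)|\le r_{\max}$ for all $(s,a)$. A policy is a Markov kernel $\pi(a\mid s)$ from $\mathcal S$ to $\mathcal A$; a dynamics kernel is a Markov kernel $q(s'\mid s,a)$ from $\mathcal S\times\mathcal A$ to $\mathcal S$. For probability distributions $\mu,\nu$ on a countable set, $D_{TV}(\mu,\nu)=\frac12\sum_x|\mu(x)-\nu(x)|$. Branched return: given a "pre-branch" pair (policy $\pi^{\mathrm{pre}}$, dynamics $q^{\mathrm{pre}}$), a "post-branch" pair (policy $\pi^{\mathrm{post}}$, dynamics $q^{\mathrm{post}}$) and an integer $k\ge0$, for each $t\ge0$ let $m_t=\max(t-k,0)$ and generate $s_0\sim\rho_0$; for $0\le i<m_t$: $a_i\sim\pi^{\mathrm{pre}}(\cdot\mid s_i)$, $s_{i+1}\sim q^{\mathrm{pre}}(\cdot\mid s_i,a_i)$; for $m_t\le i<t$: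 $a_i\sim\pi^{\mathrm{post}}(\cdot\mid s_i)$, $s_{i+1}\sim q^{\mathrm{post}}(\cdot\mid s_i,a_i)$; finally $a_t\sim\pi^{\mathrm{post}}(\cdot\mid s_t)$. Let $d_t$ be the law of $(s_t,a_t)$ so produced. The $k$-branched return is $\eta_k(\pi^{\mathrm{pre}},q^{\mathrm{pre}};\pi^{\mathrm{post}},q^{\mathrm{post}})=\sum_{t\ge0}\gamma^t\,\mathbb E_{(s,a)\sim d_t}[r(s,a)]$. (Thus the state at time $t$ is obtained by following the pre-branch pair up to time $t-k$ and then the post-branch pair for the remaining at most $k$ steps.) *)

theory Defs
  imports "HOL-Probability.Probability"
begin

definition tv_dist :: "'x pmf \<Rightarrow> 'x pmf \<Rightarrow> real" where
  "tv_dist \<mu> \<nu> = (1/2) * (\<Sum>\<^sub>\<infinity>x. \<bar>pmf \<mu> x - pmf \<nu> x\<bar>)"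

definition step_pmf :: "('s \<Rightarrow> 'a pmf) \<Rightarrow> ('s \<Rightarrow> 'a \<Rightarrow> 's pmf) \<Rightarrow> 's pmf \<Rightarrow> 's pmf" where
  "step_pmf \<pi> q \<mu> = bind_pmf \<mu> (\<lambda>s. bind_pmf (\<pi> s) (\<lambda>a. q s a))"

definition branch_m :: "nat \<Rightarrow> nat \<Rightarrow> nat" where
  "branch_m k t = max (t - k) 0"

fun branch_state ::
  "'s pmf \<Rightarrow> ('s \<Rightarrow> 'a pmf) \<Rightarrow> ('s \<Rightarrow> 'a \<Rightarrow> 's pmf) \<Rightarrow> ('s \<Rightarrow> 'a pmf) \<Rightarrow> ('s \<Rightarrow> 'a \<Rightarrow> 's pmf)
   \<Rightarrow> nat \<Rightarrow> nat \<Rightarrow> nat \<Rightarrow> 's pmf" where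
  "branch_state \<rho>0 \<pi>pre qpre \<pi>post qpost k t 0 = \<rho>0"
| "branch_state \<rho>0 \<pi>pre qpre \<pi>post qpost k t (Suc i) =
     (if i < branch_m k t
      then step_pmf \<pi>pre qpre (branch_state \<rho>0 \<pi>pre qpre \<pi>post qpost k t i)
      else step_pmf \<pi>post qpost (branch_state \<rho>0 \<pi>pre qpre \<pi>post qpost k t i))"

definition sa_pmf :: "'s pmf \<Rightarrow> ('s \<Rightarrow> 'a pmf) \<Rightarrow> ('s \<times> 'a) pmf" where
  "sa_pmf \<mu> \<pi> = bind_pmf \<mu> (\<lambda>s. map_pmf (Pair s) (\<pi> s))"

definition branch_d ::
  "'s pmf \<Rightarrow> ('s \<Rightarrow> 'a pmf) \<Rightarrow> ('s \<Rightarrow> 'a \<Rightarrow> 's pmf) \<Rightarrow> ('s \<Rightarrow> 'a pmf) \<Rightarrow> ('s \<Rightarrow> 'a \<Rightarrow> 's pmf)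
   \<Rightarrow> nat \<Rightarrow> nat \<Rightarrow> ('s \<times> 'a) pmf" where
  "branch_d \<rho>0 \<pi>pre qpre \<pi>post qpost k t =
     sa_pmf (branch_state \<rho>0 \<pi>pre qpre \<pi>post qpost k t t) \<pi>post"

definition branched_return ::
  "'s pmf \<Rightarrow> real \<Rightarrow> ('s \<Rightarrow> 'a \<Rightarrow> real) \<Rightarrow> nat \<Rightarrow>
   ('s \<Rightarrow> 'a pmf) \<Rightarrow> ('s \<Rightarrow> 'a \<Rightarrow> 's pmf) \<Rightarrow> ('s \<Rightarrow> 'a pmf) \<Rightarrow> ('s \<Rightarrow> 'a \<Rightarrow> 's pmf) \<Rightarrow> real" where
  "branched_return \<rho>0 \<gamma> r k \<pi>pre qpre \<pi>post qpost =
     (\<Sum>t. \<gamma> ^ t * measure_pmf.expectation (branch_d \<rho>0 \<pi>pre qpre \<pi>post qpost k t)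
                       (\<lambda>(s, a). r s a))"

end

theory Submission imports Defs begin

lemma integrable_pmf_bdd:
  fixes f :: "'a \<Rightarrow> real"
  assumes "\<And>x. \<bar>f x\<bar> \<le> B"
  shows "integrable (measure_pmf p) f"
  by (rule measure_pmf.integrable_const_bound[where B=B]) (auto simp: assms)

lemma expectation_bind_pmf:
  fixes f :: "'b \<Rightarrow> real"
  assumes "\<And>x. \<bar>f x\<bar> \<le> B"
  shows "measure_pmf.expectation (bind_pmf p N) f = measure_pmf.expectation p (\<lambda>x. measure_pmf.expectation (N x) f)"
  using measurable_measure_pmf[of N]
  unfolding measure_pmf_bind
  apply (intro integral_bind[where K="count_space UNIV" and B=B and B'=1])
  apply (auto simp: assms measure_pmf.emeasure_space_1 intro: measure_pmf.finite_measure)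
  done

lemma pmf_summable: "pmf p summable_on A"
proof -
  have "Infinite_Sum.abs_summable_on (pmf p) A"
    using abs_summable_equivalent pmf_abs_summable by blast
  then show ?thesis using abs_summable_summable by blast
qed

lemma pmf_infsum_1: "(\<Sum>\<^sub>\<infinity>x. pmf p x) = 1"
  using infsetsum_pmf_eq_1[of p UNIV] infsetsum_infsum[of "pmf p" UNIV] pmf_abs_summable[of p UNIV]
  by simp

lemma pmf_times_summable:
  fixes f :: "'a \<Rightarrow> real"
  assumes "\<And>x. \<bar>f x\<bar> \<le> B"
  shows "Infinite_Set_Sum.abs_summable_on (\<lambda>x. pmf p x * f x) UNIV"
proof (rule abs_summable_on_comparison_test'[where g="\<lambda>x. B * pmf p x"])
  show "Infinite_Set_Sum.abs_summable_on (\<lambda>x. B * pmf p x) UNIV"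
    by (rule abs_summable_on_cmult_right) (rule pmf_abs_summable)
  fix x
  have "\<bar>f x\<bar> * pmf p x \<le> B * pmf p x"
    by (rule mult_right_mono[OF assms]) simp
  then show "norm (pmf p x * f x) \<le> B * pmf p x"
    by (simp add: abs_mult mult.commute)
qed

lemma pmf_times_summable':
  fixes f :: "'a \<Rightarrow> real"
  assumes "\<And>x. \<bar>f x\<bar> \<le> B"
  shows "(\<lambda>x. pmf p x * f x) summable_on UNIV"
  by (rule abs_summable_summable[OF abs_summable_equivalent[THEN iffD2, OF pmf_times_summable[OF assms]]])

lemma expectation_infsum:
  fixes f :: "'a \<Rightarrow> real"
  assumes "\<And>x. \<bar>f x\<bar> \<le> B"
  shows "measure_pmf.expectation p f = (\<Sum>\<^sub>\<infinity>x. pmf p x * f x)"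
  unfolding pmf_expectation_eq_infsetsum by (rule infsetsum_infsum[OF pmf_times_summable[OF assms]])

lemma absdiff_summable: "(\<lambda>x. \<bar>pmf p x - pmf q x\<bar>) summable_on UNIV"
proof -
  have "(\<lambda>x. - pmf q x) summable_on UNIV" by (simp add: summable_on_uminus pmf_summable)
  from summable_on_add[OF pmf_summable this]
  have "(\<lambda>x. pmf p x - pmf q x) summable_on UNIV" by simp
  from summable_on_iff_abs_summable_on_real[THEN iffD1, OF this] show ?thesis by simp
qed

lemma tv_nonneg: "0 \<le> tv_dist p q"
  unfolding tv_dist_def by (simp add: infsum_nonneg)

lemma tv_le1: "tv_dist p q \<le> 1"
proof -
  have "(\<Sum>\<^sub>\<infinity>x. \<bar>pmf p x - pmf q x\<bar>) \<le> (\<Sum>\<^sub>\<infinity>x. pmf p x + pmf q x)"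
    by (intro infsum_mono absdiff_summable summable_on_add pmf_summable) (simp add: abs_le_iff)
  also have "\<dots> = 2" by (simp add: infsum_add pmf_summable pmf_infsum_1)
  finally show ?thesis unfolding tv_dist_def by simp
qed

lemma tv_bound:
  fixes f :: "'a \<Rightarrow> real"
  assumes f: "\<And>x. \<bar>f x\<bar> \<le> B"
  shows "\<bar>measure_pmf.expectation p f - measure_pmf.expectation q f\<bar> \<le> 2 * B * tv_dist p q"
proof -
  have B: "0 \<le> B" using f[of undefined] by simp
  have sq: "(\<lambda>x. pmf q x * f x) summable_on UNIV" by (rule pmf_times_summable'[OF f])
  have sB: "(\<lambda>x. B * \<bar>pmf p x - pmf q x\<bar>) summable_on UNIV"
    by (intro summable_on_cmult_right absdiff_summable)
  have le: "\<bar>(pmf p x - pmf q x) * f x\<bar> \<le> B * \<bar>pmf p x - pmf q x\<bar>" for x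
    using mult_left_mono[OF f[of x] abs_ge_zero[of "pmf p x - pmf q x"]] by (simp add: abs_mult mult.commute)
  have sd: "(\<lambda>x. \<bar>(pmf p x - pmf q x) * f x\<bar>) summable_on UNIV"
    by (rule summable_on_comparison_test[OF sB le]) simp
  then have sd': "(\<lambda>x. (pmf p x - pmf q x) * f x) summable_on UNIV"
    using summable_on_iff_abs_summable_on_real by (auto simp: real_norm_def)
  have "measure_pmf.expectation p f = (\<Sum>\<^sub>\<infinity>x. (pmf p x - pmf q x) * f x + pmf q x * f x)"
    by (simp add: expectation_infsum[OF f] algebra_simps)
  also have "\<dots> = (\<Sum>\<^sub>\<infinity>x. (pmf p x - pmf q x) * f x) + measure_pmf.expectation q f"
    by (simp add: infsum_add[OF sd' sq] expectation_infsum[OF f])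
  finally have eq: "measure_pmf.expectation p f - measure_pmf.expectation q f = (\<Sum>\<^sub>\<infinity>x. (pmf p x - pmf q x) * f x)"
    by simp
  have "\<bar>\<Sum>\<^sub>\<infinity>x. (pmf p x - pmf q x) * f x\<bar> \<le> (\<Sum>\<^sub>\<infinity>x. \<bar>(pmf p x - pmf q x) * f x\<bar>)"
    using norm_infsum_bound[of "\<lambda>x. (pmf p x - pmf q x) * f x" UNIV] sd by (simp add: real_norm_def)
  also have "\<dots> \<le> (\<Sum>\<^sub>\<infinity>x. B * \<bar>pmf p x - pmf q x\<bar>)"
    by (rule infsum_mono[OF sd sB le])
  also have "\<dots> = 2 * B * tv_dist p q"
    unfolding tv_dist_def by (simp add: infsum_cmult_right')
  finally show ?thesis using eq by simp
qed

lemma exp_abs_mono: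
  fixes f g :: "'a \<Rightarrow> real"
  assumes fg: "\<And>x. \<bar>f x\<bar> \<le> g x" and gC: "\<And>x. \<bar>g x\<bar> \<le> C"
  shows "\<bar>measure_pmf.expectation p f\<bar> \<le> measure_pmf.expectation p g"
proof -
  have fC: "\<bar>f x\<bar> \<le> C" for x using fg[of x] gC[of x] by simp
  have "\<bar>measure_pmf.expectation p f\<bar> \<le> measure_pmf.expectation p (\<lambda>x. \<bar>f x\<bar>)"
    using integral_norm_bound[of "measure_pmf p" f] by (simp add: real_norm_def)
  also have "\<dots> \<le> measure_pmf.expectation p g"
    by (rule integral_mono[OF integrable_pmf_bdd integrable_pmf_bdd fg]) (use fC gC in auto)
  finally show ?thesis .
qed

lemma exp_abs_le:
  fixes f :: "'a \<Rightarrow> real"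
  assumes "\<And>x. \<bar>f x\<bar> \<le> B"
  shows "\<bar>measure_pmf.expectation p f\<bar> \<le> B"
proof -
  have B: "0 \<le> B" using assms[of undefined] by simp
  have "\<bar>measure_pmf.expectation p f\<bar> \<le> measure_pmf.expectation p (\<lambda>_. B)"
    by (rule exp_abs_mono[where C=B]) (use assms B in auto)
  then show ?thesis by simp
qed

lemma sa_exp:
  fixes F :: "'s \<times> 'a \<Rightarrow> real"
  assumes FB: "\<And>x. \<bar>F x\<bar> \<le> B"
  shows "measure_pmf.expectation (sa_pmf \<mu> \<pi>) F = measure_pmf.expectation \<mu> (\<lambda>s. measure_pmf.expectation (\<pi> s) (\<lambda>a. F (s, a)))"
  unfolding sa_pmf_def by (simp add: expectation_bind_pmf[where B=B, OF FB] comp_def)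

definition close :: "'x pmf \<Rightarrow> 'x pmf \<Rightarrow> real \<Rightarrow> bool" where
  "close \<mu>1 \<mu>2 e \<longleftrightarrow> (\<forall>(g::'x \<Rightarrow> real) B. (\<forall>x. \<bar>g x\<bar> \<le> B) \<longrightarrow>
      \<bar>measure_pmf.expectation \<mu>1 g - measure_pmf.expectation \<mu>2 g\<bar> \<le> 2 * B * e)"

lemma close_refl: "close \<mu> \<mu> 0"
  unfolding close_def by simp

lemma close_sa:
  fixes F :: "'s \<times> 'a \<Rightarrow> real"
  assumes cl: "close \<mu>1 \<mu>2 e"
    and pol: "\<And>s. tv_dist (\<pi>1 s) (\<pi>2 s) \<le> \<epsilon>"
    and FB: "\<And>x. \<bar>F x\<bar> \<le> B"
  shows "\<bar>measure_pmf.expectation (sa_pmf \<mu>1 \<pi>1) F - measure_pmf.expectation (sa_pmf \<mu>2 \<pi>2) F\<bar> \<le> 2 * B * (e + \<epsilon>)"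
proof -
  have B0: "0 \<le> B" using FB[of undefined] by simp
  define G1 where "G1 s = measure_pmf.expectation (\<pi>1 s) (\<lambda>a. F (s, a))" for s
  define G2 where "G2 s = measure_pmf.expectation (\<pi>2 s) (\<lambda>a. F (s, a))" for s
  have G1B: "\<bar>G1 s\<bar> \<le> B" for s unfolding G1_def by (rule exp_abs_le) (rule FB)
  have G2B: "\<bar>G2 s\<bar> \<le> B" for s unfolding G2_def by (rule exp_abs_le) (rule FB)
  have d: "\<bar>G1 s - G2 s\<bar> \<le> 2 * B * \<epsilon>" for s
  proof -
    have "\<bar>G1 s - G2 s\<bar> \<le> 2 * B * tv_dist (\<pi>1 s) (\<pi>2 s)"
      unfolding G1_def G2_def by (rule tv_bound) (rule FB)
    also have "\<dots> \<le> 2 * B * \<epsilon>" using pol[of s] B0 by (simp add: mult_left_mono)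
    finally show ?thesis .
  qed
  have e0: "0 \<le> 2 * B * \<epsilon>" using d[of undefined] by linarith
  have "\<bar>measure_pmf.expectation \<mu>1 G1 - measure_pmf.expectation \<mu>1 G2\<bar>
        = \<bar>measure_pmf.expectation \<mu>1 (\<lambda>s. G1 s - G2 s)\<bar>"
    by (simp add: Bochner_Integration.integral_diff[OF integrable_pmf_bdd[OF G1B] integrable_pmf_bdd[OF G2B]])
  also have "\<dots> \<le> measure_pmf.expectation \<mu>1 (\<lambda>_. 2 * B * \<epsilon>)"
    by (rule exp_abs_mono[where C="2 * B * \<epsilon>"]) (use d e0 in auto)
  also have "\<dots> = 2 * B * \<epsilon>" by simp
  finally have 1: "\<bar>measure_pmf.expectation \<mu>1 G1 - measure_pmf.expectation \<mu>1 G2\<bar> \<le> 2 * B * \<epsilon>" .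
  have 2: "\<bar>measure_pmf.expectation \<mu>1 G2 - measure_pmf.expectation \<mu>2 G2\<bar> \<le> 2 * B * e"
    using cl G2B unfolding close_def by blast
  have "measure_pmf.expectation (sa_pmf \<mu>1 \<pi>1) F = measure_pmf.expectation \<mu>1 G1"
    unfolding G1_def by (rule sa_exp[OF FB])
  moreover have "measure_pmf.expectation (sa_pmf \<mu>2 \<pi>2) F = measure_pmf.expectation \<mu>2 G2"
    unfolding G2_def by (rule sa_exp[OF FB])
  ultimately show ?thesis using 1 2 by (simp add: algebra_simps)
qed

lemma close_step:
  fixes \<pi>1 \<pi>2 :: "'s \<Rightarrow> 'a pmf" and q1 q2 :: "'s \<Rightarrow> 'a \<Rightarrow> 's pmf"
  assumes cl: "close \<mu>1 \<mu>2 e"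
    and pol: "\<And>s. tv_dist (\<pi>1 s) (\<pi>2 s) \<le> \<epsilon>p"
    and md: "measure_pmf.expectation (sa_pmf \<mu>1 \<pi>1) (\<lambda>(s, a). tv_dist (q1 s a) (q2 s a)) \<le> \<epsilon>m"
  shows "close (step_pmf \<pi>1 q1 \<mu>1) (step_pmf \<pi>2 q2 \<mu>2) (e + \<epsilon>m + \<epsilon>p)"
  unfolding close_def
proof (intro allI impI)
  fix g :: "'s \<Rightarrow> real" and B
  assume gB': "\<forall>x. \<bar>g x\<bar> \<le> B"
  then have gB: "\<And>x. \<bar>g x\<bar> \<le> B" by blast
  have B0: "0 \<le> B" using gB[of undefined] by simp
  define h1 where "h1 s a = measure_pmf.expectation (q1 s a) g" for s a
  define h2 where "h2 s a = measure_pmf.expectation (q2 s a) g" for s a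
  define G1 where "G1 s = measure_pmf.expectation (\<pi>1 s) (h1 s)" for s
  define G2 where "G2 s = measure_pmf.expectation (\<pi>2 s) (h2 s)" for s
  define T where "T s = measure_pmf.expectation (\<pi>1 s) (\<lambda>a. tv_dist (q1 s a) (q2 s a))" for s
  have h1B: "\<bar>h1 s a\<bar> \<le> B" for s a unfolding h1_def by (rule exp_abs_le) (rule gB)
  have h2B: "\<bar>h2 s a\<bar> \<le> B" for s a unfolding h2_def by (rule exp_abs_le) (rule gB)
  have G1B: "\<bar>G1 s\<bar> \<le> B" for s unfolding G1_def by (rule exp_abs_le) (rule h1B)
  have G2B: "\<bar>G2 s\<bar> \<le> B" for s unfolding G2_def by (rule exp_abs_le) (rule h2B)
  have tvB: "\<bar>tv_dist (q1 s a) (q2 s a)\<bar> \<le> 1" for s a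
    unfolding abs_le_iff using tv_nonneg[of "q1 s a" "q2 s a"] tv_le1[of "q1 s a" "q2 s a"] by linarith
  have TB: "\<bar>T s\<bar> \<le> 1" for s unfolding T_def by (rule exp_abs_le) (rule tvB)
  have tvB': "\<bar>(\<lambda>(s, a). tv_dist (q1 s a) (q2 s a)) x\<bar> \<le> 1" for x
    using tvB by (cases x) simp
  have ET: "measure_pmf.expectation \<mu>1 T \<le> \<epsilon>m"
    using md unfolding sa_exp[OF tvB'] T_def by simp
  have d: "\<bar>G1 s - G2 s\<bar> \<le> 2 * B * (T s + \<epsilon>p)" for s
  proof -
    have e1: "G1 s - G2 s = measure_pmf.expectation (\<pi>1 s) (\<lambda>a. h1 s a - h2 s a)
        + (measure_pmf.expectation (\<pi>1 s) (h2 s) - measure_pmf.expectation (\<pi>2 s) (h2 s))"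
      unfolding G1_def G2_def
      by (simp add: Bochner_Integration.integral_diff[OF integrable_pmf_bdd[OF h1B] integrable_pmf_bdd[OF h2B]])
    have e2: "\<bar>measure_pmf.expectation (\<pi>1 s) (\<lambda>a. h1 s a - h2 s a)\<bar>
        \<le> measure_pmf.expectation (\<pi>1 s) (\<lambda>a. 2 * B * tv_dist (q1 s a) (q2 s a))"
    proof (rule exp_abs_mono[where C="2 * B"])
      fix a show "\<bar>h1 s a - h2 s a\<bar> \<le> 2 * B * tv_dist (q1 s a) (q2 s a)"
        unfolding h1_def h2_def by (rule tv_bound) (rule gB)
      show "\<bar>2 * B * tv_dist (q1 s a) (q2 s a)\<bar> \<le> 2 * B"
        using tvB[of s a] B0 tv_nonneg[of "q1 s a" "q2 s a"]
        by (simp add: abs_mult mult_left_le)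
    qed
    have e3: "measure_pmf.expectation (\<pi>1 s) (\<lambda>a. 2 * B * tv_dist (q1 s a) (q2 s a)) = 2 * B * T s"
      unfolding T_def by (rule integral_mult_right_zero)
    have e4: "\<bar>measure_pmf.expectation (\<pi>1 s) (h2 s) - measure_pmf.expectation (\<pi>2 s) (h2 s)\<bar>
        \<le> 2 * B * tv_dist (\<pi>1 s) (\<pi>2 s)"
      by (rule tv_bound) (rule h2B)
    have e5: "2 * B * tv_dist (\<pi>1 s) (\<pi>2 s) \<le> 2 * B * \<epsilon>p"
      using pol[of s] B0 by (simp add: mult_left_mono)
    have e6: "\<bar>G1 s - G2 s\<bar> \<le> \<bar>measure_pmf.expectation (\<pi>1 s) (\<lambda>a. h1 s a - h2 s a)\<bar>
        + \<bar>measure_pmf.expectation (\<pi>1 s) (h2 s) - measure_pmf.expectation (\<pi>2 s) (h2 s)\<bar>"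
      unfolding e1 by (rule abs_triangle_ineq)
    have "\<bar>G1 s - G2 s\<bar> \<le> 2 * B * T s + 2 * B * \<epsilon>p"
      using e2 e3 e4 e5 e6 by linarith
    then show ?thesis by (simp add: distrib_left)
  qed
  have TpB: "\<bar>T x + \<epsilon>p\<bar> \<le> 1 + \<bar>\<epsilon>p\<bar>" for x
    using abs_triangle_ineq[of "T x" \<epsilon>p] TB[of x] by linarith
  have "\<bar>measure_pmf.expectation \<mu>1 G1 - measure_pmf.expectation \<mu>1 G2\<bar>
        = \<bar>measure_pmf.expectation \<mu>1 (\<lambda>s. G1 s - G2 s)\<bar>"
    by (simp add: Bochner_Integration.integral_diff[OF integrable_pmf_bdd[OF G1B] integrable_pmf_bdd[OF G2B]])
  also have "\<dots> \<le> measure_pmf.expectation \<mu>1 (\<lambda>s. 2 * B * (T s + \<epsilon>p))"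
    by (rule exp_abs_mono[where C="2 * B * (1 + \<bar>\<epsilon>p\<bar>)"])
       (use d TpB B0 in \<open>auto simp: abs_mult intro!: mult_left_mono\<close>)
  also have "\<dots> = 2 * B * (measure_pmf.expectation \<mu>1 T + \<epsilon>p)"
    by (simp add: Bochner_Integration.integral_add[OF integrable_pmf_bdd[OF TB]])
  also have "\<dots> \<le> 2 * B * (\<epsilon>m + \<epsilon>p)"
    using ET B0 by (simp add: mult_left_mono)
  finally have 1: "\<bar>measure_pmf.expectation \<mu>1 G1 - measure_pmf.expectation \<mu>1 G2\<bar> \<le> 2 * B * (\<epsilon>m + \<epsilon>p)" .
  have 2: "\<bar>measure_pmf.expectation \<mu>1 G2 - measure_pmf.expectation \<mu>2 G2\<bar> \<le> 2 * B * e"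
    using cl G2B unfolding close_def by blast
  have "measure_pmf.expectation (step_pmf \<pi>1 q1 \<mu>1) g = measure_pmf.expectation \<mu>1 G1"
    unfolding step_pmf_def G1_def h1_def
    by (simp add: expectation_bind_pmf[where B=B, OF gB] expectation_bind_pmf[where B=B, OF exp_abs_le[OF gB]])
  moreover have "measure_pmf.expectation (step_pmf \<pi>2 q2 \<mu>2) g = measure_pmf.expectation \<mu>2 G2"
    unfolding step_pmf_def G2_def h2_def
    by (simp add: expectation_bind_pmf[where B=B, OF gB] expectation_bind_pmf[where B=B, OF exp_abs_le[OF gB]])
  ultimately show "\<bar>measure_pmf.expectation (step_pmf \<pi>1 q1 \<mu>1) g - measure_pmf.expectation (step_pmf \<pi>2 q2 \<mu>2) g\<bar>
      \<le> 2 * B * (e + \<epsilon>m + \<epsilon>p)"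
    using 1 2 by (simp add: algebra_simps)
qed

lemma shift_sums:
  fixes \<gamma> :: real
  assumes "0 < \<gamma>" "\<gamma> < 1"
  shows "(\<lambda>t. \<gamma> ^ t * real (t - k)) sums (\<gamma> ^ (k + 1) / (1 - \<gamma>)\<^sup>2)"
proof -
  have "(\<lambda>n. real (Suc n) * \<gamma> ^ n) sums (1 / (1 - \<gamma>)^2)"
    by (rule geometric_deriv_sums) (use assms in simp)
  from sums_mult[OF this, of "\<gamma> ^ (k + 1)"]
  have *: "(\<lambda>n. \<gamma> ^ (k + 1) * (real (Suc n) * \<gamma> ^ n)) sums (\<gamma> ^ (k + 1) / (1 - \<gamma>)\<^sup>2)" by simp
  have "(\<lambda>n. \<gamma> ^ (k + 1) * (real (Suc n) * \<gamma> ^ n)) = (\<lambda>i. (\<lambda>t. \<gamma> ^ t * real (t - k)) (i + (k + 1)))"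
    by (rule ext) (simp add: power_add algebra_simps)
  with * have "(\<lambda>i. (\<lambda>t. \<gamma> ^ t * real (t - k)) (i + (k + 1))) sums (\<gamma> ^ (k + 1) / (1 - \<gamma>)\<^sup>2)" by simp
  then show ?thesis by (subst (asm) sums_zero_iff_shift) auto
qed

theorem lemmaB4:
  fixes \<rho>0 :: "'s::countable pmf"
    and r :: "'s \<Rightarrow> 'a::countable \<Rightarrow> real"
    and \<gamma> rmax :: real and k :: nat
    and \<pi>pre1 \<pi>post1 \<pi>pre2 \<pi>post2 :: "'s \<Rightarrow> 'a pmf"
    and qpre1 qpost1 qpre2 qpost2 :: "'s \<Rightarrow> 'a \<Rightarrow> 's pmf"
    and \<epsilon>m_pre \<epsilon>m_post \<epsilon>\<pi>_pre \<epsilon>\<pi>_post :: real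
  assumes \<gamma>: "0 < \<gamma>" "\<gamma> < 1"
    and r_bound: "\<And>s a. \<bar>r s a\<bar> \<le> rmax"
    and model_pre: "\<And>t i. i < branch_m k t \<Longrightarrow>
       measure_pmf.expectation
         (sa_pmf (branch_state \<rho>0 \<pi>pre1 qpre1 \<pi>post1 qpost1 k t i) \<pi>pre1)
         (\<lambda>(s, a). tv_dist (qpre1 s a) (qpre2 s a)) \<le> \<epsilon>m_pre"
    and model_post: "\<And>t i. branch_m k t \<le> i \<Longrightarrow> i < t \<Longrightarrow>
       measure_pmf.expectation
         (sa_pmf (branch_state \<rho>0 \<pi>pre1 qpre1 \<pi>post1 qpost1 k t i) \<pi>post1)
         (\<lambda>(s, a). tv_dist (qpost1 s a) (qpost2 s a)) \<le> \<epsilon>m_post"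
    and pol_pre: "\<And>s. tv_dist (\<pi>pre1 s) (\<pi>pre2 s) \<le> \<epsilon>\<pi>_pre"
    and pol_post: "\<And>s. tv_dist (\<pi>post1 s) (\<pi>post2 s) \<le> \<epsilon>\<pi>_post"
  shows "\<bar>branched_return \<rho>0 \<gamma> r k \<pi>pre1 qpre1 \<pi>post1 qpost1
          - branched_return \<rho>0 \<gamma> r k \<pi>pre2 qpre2 \<pi>post2 qpost2\<bar>
    \<le> 2 * rmax * (\<gamma> ^ (k + 1) / (1 - \<gamma>)\<^sup>2 * (\<epsilon>m_pre + \<epsilon>\<pi>_pre)
                  + real k / (1 - \<gamma>) * (\<epsilon>m_post + \<epsilon>\<pi>_post)
                  + \<gamma> ^ k / (1 - \<gamma>) * \<epsilon>\<pi>_pre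
                  + 1 / (1 - \<gamma>) * \<epsilon>\<pi>_post)"
proof -
  define S1 where "S1 t i = branch_state \<rho>0 \<pi>pre1 qpre1 \<pi>post1 qpost1 k t i" for t i
  define S2 where "S2 t i = branch_state \<rho>0 \<pi>pre2 qpre2 \<pi>post2 qpost2 k t i" for t i
  define A where "A = \<epsilon>m_pre + \<epsilon>\<pi>_pre"
  define C where "C = \<epsilon>m_post + \<epsilon>\<pi>_post"
  have rmax0: "0 \<le> rmax" using r_bound[of undefined undefined] by simp
  have pi0: "0 \<le> \<epsilon>\<pi>_pre" using pol_pre[of undefined] tv_nonneg[of "\<pi>pre1 undefined" "\<pi>pre2 undefined"] by linarith
  have pp0: "0 \<le> \<epsilon>\<pi>_post" using pol_post[of undefined] tv_nonneg[of "\<pi>post1 undefined" "\<pi>post2 undefined"] by linarith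
  have C0: "0 \<le> C" if "0 < k"
  proof -
    have "branch_m k 1 = 0" using that by (simp add: branch_m_def)
    then have "measure_pmf.expectation
         (sa_pmf (branch_state \<rho>0 \<pi>pre1 qpre1 \<pi>post1 qpost1 k 1 0) \<pi>post1)
         (\<lambda>(s, a). tv_dist (qpost1 s a) (qpost2 s a)) \<le> \<epsilon>m_post"
      by (intro model_post) auto
    moreover have "0 \<le> measure_pmf.expectation
         (sa_pmf (branch_state \<rho>0 \<pi>pre1 qpre1 \<pi>post1 qpost1 k 1 0) \<pi>post1)
         (\<lambda>(s, a). tv_dist (qpost1 s a) (qpost2 s a))"
      by (rule integral_nonneg_AE) (auto simp: tv_nonneg split: prod.split)
    ultimately show ?thesis unfolding C_def using pp0 by linarith
  qed
  have cl: "close (S1 t i) (S2 t i) (real (min i (branch_m k t)) * A + real (i - branch_m k t) * C)"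
    if "i \<le> t" for t i
    using that
  proof (induction i)
    case 0
    show ?case unfolding S1_def S2_def using close_refl by simp
  next
    case (Suc i)
    then have it: "i < t" and IH: "close (S1 t i) (S2 t i) (real (min i (branch_m k t)) * A + real (i - branch_m k t) * C)"
      by auto
    show ?case
    proof (cases "i < branch_m k t")
      case True
      have "close (step_pmf \<pi>pre1 qpre1 (S1 t i)) (step_pmf \<pi>pre2 qpre2 (S2 t i))
          (real (min i (branch_m k t)) * A + real (i - branch_m k t) * C + \<epsilon>m_pre + \<epsilon>\<pi>_pre)"
        by (rule close_step[OF IH pol_pre]) (unfold S1_def, rule model_pre[OF True])
      moreover have "S1 t (Suc i) = step_pmf \<pi>pre1 qpre1 (S1 t i)" using True by (simp add: S1_def)
      moreover have "S2 t (Suc i) = step_pmf \<pi>pre2 qpre2 (S2 t i)" using True by (simp add: S2_def)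
      moreover have "real (min i (branch_m k t)) * A + real (i - branch_m k t) * C + \<epsilon>m_pre + \<epsilon>\<pi>_pre
          = real (min (Suc i) (branch_m k t)) * A + real (Suc i - branch_m k t) * C"
        using True by (simp add: A_def algebra_simps)
      ultimately show ?thesis by simp
    next
      case False
      have "close (step_pmf \<pi>post1 qpost1 (S1 t i)) (step_pmf \<pi>post2 qpost2 (S2 t i))
          (real (min i (branch_m k t)) * A + real (i - branch_m k t) * C + \<epsilon>m_post + \<epsilon>\<pi>_post)"
        by (rule close_step[OF IH pol_post]) (unfold S1_def, rule model_post, use False it in auto)
      moreover have "S1 t (Suc i) = step_pmf \<pi>post1 qpost1 (S1 t i)" using False by (simp add: S1_def)
      moreover have "S2 t (Suc i) = step_pmf \<pi>post2 qpost2 (S2 t i)" using False by (simp add: S2_def)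
      moreover have "real (min i (branch_m k t)) * A + real (i - branch_m k t) * C + \<epsilon>m_post + \<epsilon>\<pi>_post
          = real (min (Suc i) (branch_m k t)) * A + real (Suc i - branch_m k t) * C"
        using False by (simp add: C_def Suc_diff_le algebra_simps)
      ultimately show ?thesis by simp
    qed
  qed
  define R :: "'s \<times> 'a \<Rightarrow> real" where "R = (\<lambda>(s, a). r s a)"
  have RB: "\<bar>R x\<bar> \<le> rmax" for x by (cases x) (simp add: R_def r_bound)
  define a where "a t = \<gamma> ^ t * measure_pmf.expectation (branch_d \<rho>0 \<pi>pre1 qpre1 \<pi>post1 qpost1 k t) R" for t
  define b where "b t = \<gamma> ^ t * measure_pmf.expectation (branch_d \<rho>0 \<pi>pre2 qpre2 \<pi>post2 qpost2 k t) R" for t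
  have eqa: "branched_return \<rho>0 \<gamma> r k \<pi>pre1 qpre1 \<pi>post1 qpost1 = suminf a"
    unfolding branched_return_def a_def R_def by simp
  have eqb: "branched_return \<rho>0 \<gamma> r k \<pi>pre2 qpre2 \<pi>post2 qpost2 = suminf b"
    unfolding branched_return_def b_def R_def by simp
  have g0: "0 \<le> \<gamma> ^ t" for t using \<gamma> by simp
  have geo: "(\<lambda>t. \<gamma> ^ t) sums (1 / (1 - \<gamma>))" by (rule geometric_sums) (use \<gamma> in simp)
  have aB: "norm (a t) \<le> rmax * \<gamma> ^ t" for t
    unfolding a_def using mult_left_mono[OF exp_abs_le[OF RB, of "branch_d \<rho>0 \<pi>pre1 qpre1 \<pi>post1 qpost1 k t"] g0[of t]]
    by (simp add: abs_mult mult.commute abs_of_nonneg[OF g0])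
  have bB: "norm (b t) \<le> rmax * \<gamma> ^ t" for t
    unfolding b_def using mult_left_mono[OF exp_abs_le[OF RB, of "branch_d \<rho>0 \<pi>pre2 qpre2 \<pi>post2 qpost2 k t"] g0[of t]]
    by (simp add: abs_mult mult.commute abs_of_nonneg[OF g0])
  have sg: "summable (\<lambda>t. rmax * \<gamma> ^ t)" using sums_mult[OF geo] sums_summable by blast
  have sa: "summable a" by (rule summable_comparison_test[OF _ sg]) (use aB in auto)
  have sb: "summable b" by (rule summable_comparison_test[OF _ sg]) (use bB in auto)
  define \<beta> where "\<beta> t = 2 * rmax * A * (\<gamma> ^ t * real (t - k)) + 2 * rmax * (real k * C + \<epsilon>\<pi>_post) * \<gamma> ^ t" for t
  have \<beta>sums: "\<beta> sums (2 * rmax * A * (\<gamma> ^ (k + 1) / (1 - \<gamma>)\<^sup>2) + 2 * rmax * (real k * C + \<epsilon>\<pi>_post) * (1 / (1 - \<gamma>)))"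
    unfolding \<beta>_def by (intro sums_add sums_mult shift_sums geo \<gamma>)
  have termb: "\<bar>a t - b t\<bar> \<le> \<beta> t" for t
  proof -
    have bm: "branch_m k t = t - k" by (simp add: branch_m_def)
    have "\<bar>measure_pmf.expectation (branch_d \<rho>0 \<pi>pre1 qpre1 \<pi>post1 qpost1 k t) R
           - measure_pmf.expectation (branch_d \<rho>0 \<pi>pre2 qpre2 \<pi>post2 qpost2 k t) R\<bar>
          \<le> 2 * rmax * ((real (min t (branch_m k t)) * A + real (t - branch_m k t) * C) + \<epsilon>\<pi>_post)"
      using close_sa[OF cl[of t t] pol_post RB] unfolding branch_d_def S1_def S2_def by simp
    also have "\<dots> = 2 * rmax * (real (t - k) * A + real (min t k) * C + \<epsilon>\<pi>_post)"
    proof -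
      have m1: "min t (t - k) = t - k" by simp
      have m2: "t - (t - k) = min t k" by arith
      show ?thesis unfolding bm m1 m2 by (rule refl)
    qed
    also have "\<dots> \<le> 2 * rmax * (real (t - k) * A + real k * C + \<epsilon>\<pi>_post)"
    proof -
      have "real (min t k) * C \<le> real k * C"
      proof (cases "k = 0")
        case True then show ?thesis by simp
      next
        case False then show ?thesis using C0 by (intro mult_right_mono) auto
      qed
      then show ?thesis using rmax0 by (intro mult_left_mono) auto
    qed
    finally have "\<bar>measure_pmf.expectation (branch_d \<rho>0 \<pi>pre1 qpre1 \<pi>post1 qpost1 k t) R
           - measure_pmf.expectation (branch_d \<rho>0 \<pi>pre2 qpre2 \<pi>post2 qpost2 k t) R\<bar>
          \<le> 2 * rmax * (real (t - k) * A + real k * C + \<epsilon>\<pi>_post)" .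
    note X = this
    have "a t - b t = \<gamma> ^ t * (measure_pmf.expectation (branch_d \<rho>0 \<pi>pre1 qpre1 \<pi>post1 qpost1 k t) R
           - measure_pmf.expectation (branch_d \<rho>0 \<pi>pre2 qpre2 \<pi>post2 qpost2 k t) R)"
      unfolding a_def b_def by (simp add: right_diff_distrib)
    then have "\<bar>a t - b t\<bar> = \<gamma> ^ t * \<bar>measure_pmf.expectation (branch_d \<rho>0 \<pi>pre1 qpre1 \<pi>post1 qpost1 k t) R
           - measure_pmf.expectation (branch_d \<rho>0 \<pi>pre2 qpre2 \<pi>post2 qpost2 k t) R\<bar>"
      by (simp add: abs_mult abs_of_nonneg[OF g0])
    also have "\<dots> \<le> \<gamma> ^ t * (2 * rmax * (real (t - k) * A + real k * C + \<epsilon>\<pi>_post))"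
      by (rule mult_left_mono[OF X g0])
    also have "\<dots> = \<beta> t" unfolding \<beta>_def by (simp add: algebra_simps)
    finally show ?thesis .
  qed
  have sab: "summable (\<lambda>t. a t - b t)" by (rule summable_diff[OF sa sb])
  have s\<beta>: "summable \<beta>" using \<beta>sums sums_summable by blast
  have "suminf a - suminf b = (\<Sum>t. a t - b t)" by (rule suminf_diff[OF sa sb])
  moreover have "(\<Sum>t. a t - b t) \<le> suminf \<beta>"
    by (rule suminf_le[OF _ sab s\<beta>]) (use termb in \<open>simp add: abs_le_iff\<close>)
  moreover have "(\<Sum>t. - (a t - b t)) \<le> suminf \<beta>"
    by (rule suminf_le[OF _ summable_minus[OF sab] s\<beta>]) (use termb in \<open>simp add: abs_le_iff\<close>)
  moreover have "(\<Sum>t. - (a t - b t)) = - (\<Sum>t. a t - b t)" by (rule suminf_minus[OF sab])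
  ultimately have main: "\<bar>suminf a - suminf b\<bar> \<le> suminf \<beta>" by linarith
  have "suminf \<beta> = 2 * rmax * A * (\<gamma> ^ (k + 1) / (1 - \<gamma>)\<^sup>2) + 2 * rmax * (real k * C + \<epsilon>\<pi>_post) * (1 / (1 - \<gamma>))"
    using \<beta>sums sums_unique by metis
  also have "\<dots> \<le> 2 * rmax * (\<gamma> ^ (k + 1) / (1 - \<gamma>)\<^sup>2 * (\<epsilon>m_pre + \<epsilon>\<pi>_pre)
                  + real k / (1 - \<gamma>) * (\<epsilon>m_post + \<epsilon>\<pi>_post)
                  + \<gamma> ^ k / (1 - \<gamma>) * \<epsilon>\<pi>_pre
                  + 1 / (1 - \<gamma>) * \<epsilon>\<pi>_post)"
  proof -
    have nn: "0 \<le> 2 * rmax * (\<gamma> ^ k / (1 - \<gamma>) * \<epsilon>\<pi>_pre)"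
      using rmax0 pi0 \<gamma> by simp
    have "2 * rmax * (\<gamma> ^ (k + 1) / (1 - \<gamma>)\<^sup>2 * (\<epsilon>m_pre + \<epsilon>\<pi>_pre)
                  + real k / (1 - \<gamma>) * (\<epsilon>m_post + \<epsilon>\<pi>_post)
                  + \<gamma> ^ k / (1 - \<gamma>) * \<epsilon>\<pi>_pre
                  + 1 / (1 - \<gamma>) * \<epsilon>\<pi>_post)
       = 2 * rmax * A * (\<gamma> ^ (k + 1) / (1 - \<gamma>)\<^sup>2) + 2 * rmax * (real k * C + \<epsilon>\<pi>_post) * (1 / (1 - \<gamma>))
         + 2 * rmax * (\<gamma> ^ k / (1 - \<gamma>) * \<epsilon>\<pi>_pre)"
      unfolding A_def C_def by (simp add: algebra_simps add_divide_distrib)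
    then show ?thesis using nn by linarith
  qed
  finally show ?thesis using main eqa eqb by simp
qed

end
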